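(* Suppose $\mathcal C,\widetilde{\mathcal C}$ are self-adjoint, positive definite, compact operators on $L_2(\mathcal X,\nu_{\mathcal X})$ which diagonalize with respect to the same orthonormal basis $\{e_j\}_{j\in\mathbb N}$ of $L_2(\mathcal X,\nu_{\mathcal X})$, i.e. there are eigenvalues $\gamma_j,\widetilde\gamma_j\in(0,\infty)$, accumulating only at zero, with $\mathcal Ce_j=\gamma_je_j$ and $\widetilde{\mathcal C}e_j=\widetilde\gamma_je_j$ for all $j$. Then the following two conditions both hold: (I) the Cameron–Martin spaces $\mathcal C^{1/2}(L_2)$ and $\widetilde{\mathcal C}^{1/2}(L_2)$ are norm equivalent Hilbert spaces; (III) there exists $a\in(0,\infty)$ such that $\mathcal C^{-1/2}\widetilde{\mathcal C}\mathcal C^{-1/2}-a\mathcal I$ is compact on $L_2(\mathcal X,\nu_{\mathcal X})$; if and only if there exists $a\in(0,\infty)$ with $\lim_{j\to\infty}\widetilde\gamma_j/\gamma_j=a$.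
   Context: $(\mathcal X,d_{\mathcal X})$ is a connected, compact metric space of infinite cardinality and $\nu_{\mathcal X}$ a strictly positive finite Borel measure; $L_2=L_2(\mathcal X,\nu_{\mathcal X})$, $\mathcal I$ the identity. The Cameron–Martin space $\mathcal C^{1/2}(L_2)$ carries the norm $\|u\|=\|\mathcal C^{-1/2}u\|_{L_2}$, analogously for $\widetilde{\mathcal C}$. *)

theory Defs
  imports "HOL-Analysis.Analysis"
begin

text \<open>The Hilbert space L2 is modelled abstractly by a real Hilbert space type
  (real inner product space that is complete). Operators are functions on it.\<close>

definition selfadjoint_op :: "('a::real_inner \<Rightarrow> 'a) \<Rightarrow> bool" where
  "selfadjoint_op T \<longleftrightarrow> (\<forall>x y. inner (T x) y = inner x (T y))"

definition posdef_op :: "('a::real_inner \<Rightarrow> 'a) \<Rightarrow> bool" where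
  "posdef_op T \<longleftrightarrow> (\<forall>x. x \<noteq> 0 \<longrightarrow> inner (T x) x > 0)"

definition positive_op :: "('a::real_inner \<Rightarrow> 'a) \<Rightarrow> bool" where
  "positive_op T \<longleftrightarrow> (\<forall>x. inner (T x) x \<ge> 0)"

definition compact_op :: "('a::real_normed_vector \<Rightarrow> 'b::real_normed_vector) \<Rightarrow> bool" where
  "compact_op K \<longleftrightarrow> bounded_linear K \<and> compact (closure (K ` ball 0 1))"

definition orthonormal_basis :: "(nat \<Rightarrow> 'a::real_inner) \<Rightarrow> bool" where
  "orthonormal_basis e \<longleftrightarrow> (\<forall>i j. inner (e i) (e j) = (if i = j then 1 else 0))
       \<and> closure (span (range e)) = UNIV"

definition sqrt_op :: "('a::real_inner \<Rightarrow> 'a) \<Rightarrow> ('a \<Rightarrow> 'a)" where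
  "sqrt_op C = (THE S. bounded_linear S \<and> selfadjoint_op S \<and> positive_op S \<and> S \<circ> S = C)"

definition invsqrt_op :: "('a::real_inner \<Rightarrow> 'a) \<Rightarrow> ('a \<Rightarrow> 'a)" where
  "invsqrt_op C = inv_into UNIV (sqrt_op C)"

definition CM_space :: "('a::real_inner \<Rightarrow> 'a) \<Rightarrow> 'a set" where
  "CM_space C = range (sqrt_op C)"

definition CM_norm :: "('a::real_inner \<Rightarrow> 'a) \<Rightarrow> 'a \<Rightarrow> real" where
  "CM_norm C u = norm (invsqrt_op C u)"

definition CM_norm_equivalent :: "('a::real_inner \<Rightarrow> 'a) \<Rightarrow> ('a \<Rightarrow> 'a) \<Rightarrow> bool" where
  "CM_norm_equivalent C C' \<longleftrightarrow> CM_space C = CM_space C' \<and>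
     (\<exists>c1 c2. c1 > 0 \<and> c2 > 0 \<and> (\<forall>u\<in>CM_space C.
        c1 * CM_norm C u \<le> CM_norm C' u \<and> CM_norm C' u \<le> c2 * CM_norm C u))"

text \<open>Natural domain of the (possibly unbounded) operator C^(-1/2) C' C^(-1/2).\<close>
definition sandwich_dom :: "('a::real_inner \<Rightarrow> 'a) \<Rightarrow> ('a \<Rightarrow> 'a) \<Rightarrow> 'a set" where
  "sandwich_dom C C' = {x \<in> CM_space C. C' (invsqrt_op C x) \<in> CM_space C}"

definition sandwich_op :: "('a::real_inner \<Rightarrow> 'a) \<Rightarrow> ('a \<Rightarrow> 'a) \<Rightarrow> 'a \<Rightarrow> 'a" where
  "sandwich_op C C' x = invsqrt_op C (C' (invsqrt_op C x))"

text \<open>Condition (III) for a given a: C^(-1/2) C' C^(-1/2) - a I is densely defined and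
  agrees on its domain with a compact operator on the whole space.\<close>
definition sandwich_minus_compact :: "('a::real_inner \<Rightarrow> 'a) \<Rightarrow> ('a \<Rightarrow> 'a) \<Rightarrow> real \<Rightarrow> bool" where
  "sandwich_minus_compact C C' a \<longleftrightarrow> closure (sandwich_dom C C') = UNIV \<and>
     (\<exists>K. compact_op K \<and> (\<forall>x\<in>sandwich_dom C C'. sandwich_op C C' x - a *\<^sub>R x = K x))"

end

theory Submission
  imports Defs "HOL-Library.Infinite_Set"
begin

definition onf :: "(nat \<Rightarrow> 'a::real_inner) \<Rightarrow> bool" where
  "onf e \<longleftrightarrow> (\<forall>i j. inner (e i) (e j) = (if i = j then 1 else 0))"

definition ser :: "(nat \<Rightarrow> 'a::real_normed_vector) \<Rightarrow> (nat \<Rightarrow> real) \<Rightarrow> 'a" where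
  "ser e c = (\<Sum>j. c j *\<^sub>R e j)"

definition coef :: "(nat \<Rightarrow> 'a::real_inner) \<Rightarrow> 'a \<Rightarrow> nat \<Rightarrow> real" where
  "coef e x j = inner x (e j)"

definition diag :: "(nat \<Rightarrow> 'a::real_inner) \<Rightarrow> (nat \<Rightarrow> real) \<Rightarrow> 'a \<Rightarrow> 'a" where
  "diag e d x = ser e (\<lambda>j. d j * coef e x j)"

lemma onf_inner: "onf e \<Longrightarrow> inner (e i) (e j) = (if i = j then 1 else 0)"
  by (simp add: onf_def)

lemma onf_A1:
  assumes "onf e" "finite F"
  shows "inner (\<Sum>j\<in>F. c j *\<^sub>R e j) (e k) = (if k \<in> F then c k else 0)"
proof -
  have "inner (\<Sum>j\<in>F. c j *\<^sub>R e j) (e k) = (\<Sum>j\<in>F. c j * (if j = k then 1 else 0))"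
    by (simp add: inner_sum_left onf_inner[OF assms(1)])
  also have "\<dots> = (\<Sum>j\<in>F. if j = k then c j else 0)"
    by (rule sum.cong) auto
  also have "\<dots> = (if k \<in> F then c k else 0)"
    using assms(2) by (simp add: sum.delta')
  finally show ?thesis .
qed

lemma onf_A2:
  assumes "onf e" "finite F"
  shows "norm (\<Sum>j\<in>F. c j *\<^sub>R e j) ^ 2 = (\<Sum>j\<in>F. (c j)^2)"
proof -
  have "norm (\<Sum>j\<in>F. c j *\<^sub>R e j) ^ 2 = inner (\<Sum>j\<in>F. c j *\<^sub>R e j) (\<Sum>j\<in>F. c j *\<^sub>R e j)"
    by (simp add: power2_norm_eq_inner)
  also have "\<dots> = (\<Sum>i\<in>F. c i * inner (\<Sum>j\<in>F. c j *\<^sub>R e j) (e i))"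
    by (simp add: inner_sum_right)
  also have "\<dots> = (\<Sum>i\<in>F. (c i)^2)"
    using assms by (simp add: onf_A1 power2_eq_square)
  finally show ?thesis .
qed

lemma onf_bessel:
  assumes "onf e" "finite F"
  shows "(\<Sum>j\<in>F. (inner x (e j))^2) \<le> norm x ^ 2"
proof -
  define P where "P = (\<Sum>j\<in>F. inner x (e j) *\<^sub>R e j)"
  have xP: "inner x P = (\<Sum>j\<in>F. (inner x (e j))^2)"
    by (simp add: P_def inner_sum_right power2_eq_square)
  have PP: "norm P ^ 2 = (\<Sum>j\<in>F. (inner x (e j))^2)"
    unfolding P_def using assms by (rule onf_A2)
  have "0 \<le> norm (x - P) ^ 2" by simp
  also have "\<dots> = norm x ^ 2 - 2 * inner x P + norm P ^ 2"
    by (simp add: power2_norm_eq_inner inner_diff_left inner_diff_right inner_commute)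
  finally show ?thesis using xP PP by simp
qed

lemma onf_coef_summable:
  assumes "onf e"
  shows "summable (\<lambda>j. (inner x (e j))^2)"
proof (rule summableI_nonneg_bounded[where x="norm x ^ 2"])
  fix n show "(\<Sum>j<n. (inner x (e j))^2) \<le> norm x ^ 2"
    using onf_bessel[OF assms] by simp
qed simp

lemma onf_ser_summable:
  fixes e :: "nat \<Rightarrow> 'a::{real_inner,complete_space}"
  assumes "onf e" "summable (\<lambda>j. (c j)^2)"
  shows "summable (\<lambda>j. c j *\<^sub>R e j)"
proof -
  have key: "dist (\<Sum>j<m. c j *\<^sub>R e j) (\<Sum>j<n. c j *\<^sub>R e j) < \<epsilon>"
    if N: "\<And>m n. m \<ge> N \<Longrightarrow> norm (\<Sum>j\<in>{m..<n}. (c j)^2) < \<epsilon>^2"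
      and "\<epsilon> > 0" "N \<le> n" "n \<le> m" for m n N \<epsilon>
  proof -
    have "dist (\<Sum>j<m. c j *\<^sub>R e j) (\<Sum>j<n. c j *\<^sub>R e j) = norm (\<Sum>j\<in>{n..<m}. c j *\<^sub>R e j)"
      using \<open>n \<le> m\<close> sum_diff_nat_ivl[of 0 n m "\<lambda>j. c j *\<^sub>R e j"] unfolding dist_norm lessThan_atLeast0 by simp
    moreover have "norm (\<Sum>j\<in>{n..<m}. c j *\<^sub>R e j) ^ 2 = (\<Sum>j\<in>{n..<m}. (c j)^2)"
      using assms(1) by (rule onf_A2) simp
    moreover have "(\<Sum>j\<in>{n..<m}. (c j)^2) < \<epsilon>^2" using N[OF \<open>N \<le> n\<close>, of m]
      by (simp add: sum_nonneg)
    ultimately show ?thesis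
      using \<open>\<epsilon> > 0\<close> power_less_imp_less_base[of "norm (\<Sum>j\<in>{n..<m}. c j *\<^sub>R e j)" 2 \<epsilon>] by simp
  qed
  have "Cauchy (\<lambda>n. \<Sum>j<n. c j *\<^sub>R e j)"
  proof (rule metric_CauchyI)
    fix \<epsilon> :: real assume "\<epsilon> > 0"
    then have "\<epsilon>^2 > 0" by simp
    with assms(2) obtain N where N: "\<And>m n. m \<ge> N \<Longrightarrow> norm (\<Sum>j\<in>{m..<n}. (c j)^2) < \<epsilon>^2"
      unfolding summable_Cauchy by blast
    show "\<exists>M. \<forall>m\<ge>M. \<forall>n\<ge>M. dist (\<Sum>j<m. c j *\<^sub>R e j) (\<Sum>j<n. c j *\<^sub>R e j) < \<epsilon>"
    proof (intro exI allI impI)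
      fix m n assume "N \<le> m" "N \<le> n"
      show "dist (\<Sum>j<m. c j *\<^sub>R e j) (\<Sum>j<n. c j *\<^sub>R e j) < \<epsilon>"
      proof (cases "n \<le> m")
        case True then show ?thesis using key[OF N \<open>\<epsilon>>0\<close> \<open>N \<le> n\<close>] by blast
      next
        case False then show ?thesis using key[OF N \<open>\<epsilon>>0\<close> \<open>N \<le> m\<close>, of n]
          by (simp add: dist_commute)
      qed
    qed
  qed
  then show ?thesis
    by (simp add: summable_iff_convergent Cauchy_convergent_iff)
qed

lemma onf_ser_inner_sums:
  fixes e :: "nat \<Rightarrow> 'a::{real_inner,complete_space}"
  assumes "onf e" "summable (\<lambda>j. (c j)^2)"
  shows "(\<lambda>j. c j * inner (e j) v) sums inner (ser e c) v"
proof -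
  have "(\<lambda>j. c j *\<^sub>R e j) sums ser e c"
    unfolding ser_def using onf_ser_summable[OF assms] by (rule summable_sums)
  from bounded_linear.sums[OF bounded_linear_inner_left this, of v]
  show ?thesis by simp
qed

lemma onf_ser_coef:
  fixes e :: "nat \<Rightarrow> 'a::{real_inner,complete_space}"
  assumes "onf e" "summable (\<lambda>j. (c j)^2)"
  shows "inner (ser e c) (e k) = c k"
proof -
  have "(\<lambda>j. c j * inner (e j) (e k)) = (\<lambda>j. if j = k then c j else 0)"
    using assms(1) by (auto simp: onf_inner)
  with onf_ser_inner_sums[OF assms, of "e k"] have "(\<lambda>j. if j = k then c j else 0) sums inner (ser e c) (e k)"
    by simp
  with sums_single[of k c] show ?thesis using sums_unique2 by blast
qed

lemma onf_ser_norm: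
  fixes e :: "nat \<Rightarrow> 'a::{real_inner,complete_space}"
  assumes "onf e" "summable (\<lambda>j. (c j)^2)"
  shows "norm (ser e c) ^ 2 = (\<Sum>j. (c j)^2)"
proof -
  have "(\<lambda>j. c j * inner (e j) (ser e c)) sums inner (ser e c) (ser e c)"
    by (rule onf_ser_inner_sums[OF assms])
  moreover have "(\<lambda>j. c j * inner (e j) (ser e c)) = (\<lambda>j. (c j)^2)"
    using onf_ser_coef[OF assms] by (simp add: inner_commute power2_eq_square)
  ultimately show ?thesis by (simp add: power2_norm_eq_inner sums_iff)
qed

lemma onb_onf: "orthonormal_basis e \<Longrightarrow> onf e"
  by (simp add: orthonormal_basis_def onf_def)

lemma onb_zero:
  assumes "orthonormal_basis e" "\<And>k. inner y (e k) = 0"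
  shows "y = 0"
proof -
  define T where "T = {z. inner y z = 0}"
  have "subspace T" unfolding T_def subspace_def by (simp add: inner_add_right)
  have "closed T" unfolding T_def
    by (intro closed_Collect_eq continuous_intros)
  have "range e \<subseteq> T" using assms(2) by (auto simp: T_def)
  then have "span (range e) \<subseteq> T" using \<open>subspace T\<close> by (rule span_minimal)
  then have "closure (span (range e)) \<subseteq> T" using \<open>closed T\<close> by (rule closure_minimal)
  then have "y \<in> T" using assms(1) by (auto simp: orthonormal_basis_def)
  then show ?thesis by (simp add: T_def)
qed

lemma onb_eqI:
  assumes "orthonormal_basis e" "\<And>k. inner x (e k) = inner y (e k)"
  shows "x = y"
  using onb_zero[OF assms(1), of "x - y"] assms(2) by (simp add: inner_diff_left)

lemma onb_expansion:
  fixes e :: "nat \<Rightarrow> 'a::{real_inner,complete_space}"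
  assumes "orthonormal_basis e"
  shows "ser e (coef e x) = x"
  unfolding coef_def[abs_def] using onf_ser_coef[OF onb_onf[OF assms] onf_coef_summable[OF onb_onf[OF assms]]]
  by (intro onb_eqI[OF assms]) (simp add: coef_def)

lemma onb_expansion':
  fixes e :: "nat \<Rightarrow> 'a::{real_inner,complete_space}"
  assumes "orthonormal_basis e"
  shows "ser e (\<lambda>j. inner x (e j)) = x"
  using onb_expansion[OF assms, of x] unfolding coef_def[abs_def] .

lemma onb_parseval:
  fixes e :: "nat \<Rightarrow> 'a::{real_inner,complete_space}"
  assumes "orthonormal_basis e"
  shows "norm x ^ 2 = (\<Sum>j. (coef e x j)^2)"
  unfolding coef_def using onf_ser_norm[OF onb_onf[OF assms] onf_coef_summable[OF onb_onf[OF assms]], of x]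
  by (simp only: onb_expansion'[OF assms])

lemma onb_inner_sums:
  fixes e :: "nat \<Rightarrow> 'a::{real_inner,complete_space}"
  assumes "orthonormal_basis e"
  shows "(\<lambda>j. coef e x j * coef e y j) sums inner x y"
  unfolding coef_def using onf_ser_inner_sums[OF onb_onf[OF assms] onf_coef_summable[OF onb_onf[OF assms]], of x y]
  by (simp only: onb_expansion'[OF assms] inner_commute[of "e _" y])

lemma coef_summable:
  "orthonormal_basis e \<Longrightarrow> summable (\<lambda>j. (coef e x j)^2)"
  unfolding coef_def by (rule onf_coef_summable[OF onb_onf])

lemma diag_summable:
  assumes "orthonormal_basis e" "\<And>j. \<bar>d j\<bar> \<le> B"
  shows "summable (\<lambda>j. (d j * coef e x j)^2)"
proof (rule summable_comparison_test'[where g="\<lambda>j. B^2 * (coef e x j)^2"])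
  show "summable (\<lambda>j. B^2 * (coef e x j)^2)"
    using coef_summable[OF assms(1)] by (rule summable_mult)
  fix j
  have "(d j)^2 \<le> B^2" using power_mono[of "\<bar>d j\<bar>" B 2] assms(2)[of j] by simp
  then have "(d j)^2 * (coef e x j)^2 \<le> B^2 * (coef e x j)^2"
    by (simp add: mult_right_mono)
  then show "norm ((d j * coef e x j)^2) \<le> B^2 * (coef e x j)^2"
    by (simp add: power_mult_distrib)
qed

lemma coef_diag:
  fixes e :: "nat \<Rightarrow> 'a::{real_inner,complete_space}"
  assumes "orthonormal_basis e" "\<And>j. \<bar>d j\<bar> \<le> B"
  shows "coef e (diag e d x) k = d k * coef e x k"
  unfolding diag_def coef_def[of e "ser e _"]
  by (rule onf_ser_coef[OF onb_onf[OF assms(1)] diag_summable[OF assms]])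

lemma coef_add: "coef e (x + y) k = coef e x k + coef e y k"
  by (simp add: coef_def inner_add_left)
lemma coef_scale: "coef e (c *\<^sub>R x) k = c * coef e x k"
  by (simp add: coef_def)
lemma coef_diff: "coef e (x - y) k = coef e x k - coef e y k"
  by (simp add: coef_def inner_diff_left)

lemma coef_basis: "onf e \<Longrightarrow> coef e (e j) k = (if j = k then 1 else 0)"
  by (simp add: coef_def onf_inner)

lemma diag_norm:
  fixes e :: "nat \<Rightarrow> 'a::{real_inner,complete_space}"
  assumes "orthonormal_basis e" "\<And>j. \<bar>d j\<bar> \<le> B"
  shows "norm (diag e d x) \<le> B * norm x"
proof -
  have B0: "0 \<le> B" using assms(2)[of 0] by simp
  have "norm (diag e d x) ^ 2 = (\<Sum>j. (d j * coef e x j)^2)"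
    unfolding diag_def by (rule onf_ser_norm[OF onb_onf[OF assms(1)] diag_summable[OF assms]])
  also have "\<dots> \<le> (\<Sum>j. B^2 * (coef e x j)^2)"
  proof (rule suminf_le)
    fix j
    have "(d j)^2 \<le> B^2" using power_mono[of "\<bar>d j\<bar>" B 2] assms(2)[of j] by simp
    then have "(d j)^2 * (coef e x j)^2 \<le> B^2 * (coef e x j)^2"
      by (simp add: mult_right_mono)
    then show "(d j * coef e x j)^2 \<le> B^2 * (coef e x j)^2"
      by (simp add: power_mult_distrib)
  qed (use diag_summable[OF assms] coef_summable[OF assms(1)] summable_mult in auto)
  also have "\<dots> = B^2 * norm x ^ 2"
    using suminf_mult[OF coef_summable[OF assms(1)], of "B^2" x] onb_parseval[OF assms(1), of x]
    by simp
  also have "\<dots> = (B * norm x)^2" by (simp add: power_mult_distrib)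
  finally have "norm (diag e d x)^2 \<le> (B * norm x)^2" .
  then show ?thesis by (rule power2_le_imp_le) (simp add: B0)
qed

lemma diag_bounded_linear:
  fixes e :: "nat \<Rightarrow> 'a::{real_inner,complete_space}"
  assumes "orthonormal_basis e" "\<And>j. \<bar>d j\<bar> \<le> B"
  shows "bounded_linear (diag e d)"
proof (rule bounded_linear_intro[where K=B])
  fix x y :: 'a and c :: real
  show "diag e d (x + y) = diag e d x + diag e d y"
    by (rule onb_eqI[OF assms(1)], fold coef_def)
       (simp add: coef_add coef_diag[OF assms] algebra_simps)
  show "diag e d (c *\<^sub>R x) = c *\<^sub>R diag e d x"
    by (rule onb_eqI[OF assms(1)], fold coef_def)
       (simp add: coef_scale coef_diag[OF assms] algebra_simps)
  show "norm (diag e d x) \<le> norm x * B"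
    using diag_norm[OF assms] by (simp add: mult.commute)
qed

lemma diag_basis:
  fixes e :: "nat \<Rightarrow> 'a::{real_inner,complete_space}"
  assumes "orthonormal_basis e" "\<And>j. \<bar>d j\<bar> \<le> B"
  shows "diag e d (e k) = d k *\<^sub>R e k"
  by (rule onb_eqI[OF assms(1)], fold coef_def)
     (simp add: coef_scale coef_diag[OF assms] coef_basis[OF onb_onf[OF assms(1)]])

lemma diag_diag:
  fixes e :: "nat \<Rightarrow> 'a::{real_inner,complete_space}"
  assumes "orthonormal_basis e" "\<And>j. \<bar>d j\<bar> \<le> B" "\<And>j. \<bar>d' j\<bar> \<le> B'"
  shows "diag e d (diag e d' x) = diag e (\<lambda>j. d j * d' j) x"
proof -
  have bd: "\<bar>d j * d' j\<bar> \<le> B * B'" for j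
    using assms(2,3)[of j] by (simp add: abs_mult mult_mono')
  show ?thesis
    by (intro onb_eqI[OF assms(1)], fold coef_def)
       (simp add: coef_diag[OF assms(1,2)] coef_diag[OF assms(1,3)] coef_diag[OF assms(1) bd])
qed

lemma diag_inj:
  fixes e :: "nat \<Rightarrow> 'a::{real_inner,complete_space}"
  assumes "orthonormal_basis e" "\<And>j. \<bar>d j\<bar> \<le> B" "\<And>j. d j \<noteq> 0"
  shows "inj (diag e d)"
proof (rule injI)
  fix x y assume "diag e d x = diag e d y"
  then have "coef e (diag e d x) k = coef e (diag e d y) k" for k by simp
  then show "x = y"
    using assms(3) by (intro onb_eqI[OF assms(1)], fold coef_def) (simp add: coef_diag[OF assms(1,2)])
qed

lemma diag_cong_fun:
  fixes e :: "nat \<Rightarrow> 'a::{real_inner,complete_space}"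
  assumes "orthonormal_basis e" "\<And>j. \<bar>d j\<bar> \<le> B" "\<And>x k. coef e (T x) k = d k * coef e x k"
  shows "T = diag e d"
  using assms by (intro ext onb_eqI[OF assms(1)], fold coef_def) (simp add: coef_diag[OF assms(1,2)])

lemma sqrt_op_diag:
  fixes e :: "nat \<Rightarrow> 'a::{real_inner,complete_space}"
  assumes onb: "orthonormal_basis e" and gpos: "\<And>j. g j > 0" and gB: "\<And>j. \<bar>g j\<bar> \<le> B"
    and Cd: "C = diag e g"
  shows "sqrt_op C = diag e (\<lambda>j. sqrt (g j))"
proof -
  define s where "s = (\<lambda>j. sqrt (g j))"
  have sB: "\<bar>s j\<bar> \<le> sqrt B" for j
    using gB[of j] gpos[of j] by (simp add: s_def real_sqrt_le_mono)
  have spos: "s j > 0" for j using gpos[of j] by (simp add: s_def)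
  have ss: "s j * s j = g j" for j using gpos[of j] by (simp add: s_def less_imp_le)
  have gC: "C (e k) = g k *\<^sub>R e k" for k
    unfolding Cd by (rule diag_basis[OF onb gB])
  let ?S = "diag e s"
  have P: "bounded_linear ?S \<and> selfadjoint_op ?S \<and> positive_op ?S \<and> ?S \<circ> ?S = C"
  proof (intro conjI)
    show "bounded_linear ?S" by (rule diag_bounded_linear[OF onb sB])
    show "selfadjoint_op ?S" unfolding selfadjoint_op_def
    proof (intro allI)
      fix x y
      have "(\<lambda>j. s j * coef e x j * coef e y j) sums inner (?S x) y"
        using onb_inner_sums[OF onb, of "?S x" y] by (simp add: coef_diag[OF onb sB])
      moreover have "(\<lambda>j. s j * coef e x j * coef e y j) sums inner x (?S y)"
        using onb_inner_sums[OF onb, of x "?S y"] by (simp add: coef_diag[OF onb sB] ac_simps)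
      ultimately show "inner (?S x) y = inner x (?S y)" by (rule sums_unique2)
    qed
    show "positive_op ?S" unfolding positive_op_def
    proof (intro allI)
      fix x
      have sm: "(\<lambda>j. s j * coef e x j * coef e x j) sums inner (?S x) x"
        using onb_inner_sums[OF onb, of "?S x" x] by (simp add: coef_diag[OF onb sB])
      have nn: "\<And>j. 0 \<le> s j * coef e x j * coef e x j"
        using spos by (simp add: mult.assoc less_imp_le)
      show "inner (?S x) x \<ge> 0"
        by (rule sums_le[OF nn sums_zero sm])
    qed
    show "?S \<circ> ?S = C"
      by (rule ext) (simp add: diag_diag[OF onb sB sB] ss Cd)
  qed
  have U: "S = ?S" if H: "bounded_linear S \<and> selfadjoint_op S \<and> positive_op S \<and> S \<circ> S = C" for S
  proof -
    from H have lin: "linear S" by (simp add: bounded_linear.linear)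
    from H have sa: "\<And>x y. inner (S x) y = inner x (S y)" by (simp add: selfadjoint_op_def)
    from H have po: "\<And>x. inner (S x) x \<ge> 0" by (simp add: positive_op_def)
    from H have SC: "S \<circ> S = C" by simp
    have SS: "S (S x) = C x" for x
      using arg_cong[OF SC, of "\<lambda>f. f x"] by simp
    have Se: "S (e k) = s k *\<^sub>R e k" for k
    proof -
      define v where "v = S (e k) - s k *\<^sub>R e k"
      have "S v = C (e k) - s k *\<^sub>R S (e k)"
        unfolding v_def using lin by (simp add: linear_diff linear_scale SS)
      then have "S v + s k *\<^sub>R v = 0"
        by (simp add: v_def gC ss[symmetric] algebra_simps)
      then have "0 = inner (S v + s k *\<^sub>R v) v" by simp
      also have "\<dots> = inner (S v) v + s k * (norm v)^2"
        by (simp add: inner_add_left power2_norm_eq_inner)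
      finally have "s k * (norm v)^2 \<le> 0" using po[of v] by linarith
      with spos[of k] have "(norm v)^2 \<le> 0"
        by (simp add: mult_le_0_iff)
      then have "v = 0" by simp
      then show ?thesis by (simp add: v_def)
    qed
    show ?thesis
    proof (rule diag_cong_fun[OF onb sB])
      fix x k
      show "coef e (S x) k = s k * coef e x k"
        unfolding coef_def by (simp add: sa Se)
    qed
  qed
  have "sqrt_op C = ?S"
    unfolding sqrt_op_def
    by (rule the_equality[where P="\<lambda>S. bounded_linear S \<and> selfadjoint_op S \<and> positive_op S \<and> S \<circ> S = C", OF P U])
  then show ?thesis by (simp add: s_def)
qed

lemma onf_reindex: "onf e \<Longrightarrow> inj \<phi> \<Longrightarrow> onf (e \<circ> \<phi>)"
  by (auto simp: onf_def inj_eq)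

lemma harmonic_sq_summable: "summable (\<lambda>n. (1 / real (Suc n))^2)"
proof -
  have "summable (\<lambda>n. inverse (real n ^ 2))"
    by (rule inverse_power_summable) simp
  then have "summable (\<lambda>n. inverse (real (Suc n) ^ 2))"
    by (subst summable_Suc_iff)
  then show ?thesis by (simp add: power_one_over divide_inverse power_inverse)
qed

lemma harmonic_not_summable: "\<not> summable (\<lambda>n. 1 / real (Suc n))"
proof
  assume "summable (\<lambda>n. 1 / real (Suc n))"
  then have "summable (\<lambda>n. inverse (real (Suc n)))" by (simp add: divide_inverse)
  then have "summable (\<lambda>n. inverse (real n))" by (subst (asm) summable_Suc_iff)
  with not_summable_harmonic show False by blast
qed

lemma compact_op_basis_tendsto:
  fixes e :: "nat \<Rightarrow> 'a::{real_inner,complete_space}"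
    and K :: "'a \<Rightarrow> 'a"
  assumes K: "compact_op K" and on: "onf e"
  shows "(\<lambda>j. K (e j)) \<longlonglongrightarrow> 0"
proof (rule ccontr)
  assume nt: "\<not> (\<lambda>j. K (e j)) \<longlonglongrightarrow> 0"
  have bl: "bounded_linear K" using K by (simp add: compact_op_def)
  have cpt: "compact (closure (K ` ball 0 1))" using K by (simp add: compact_op_def)
  have ee: "norm (e j) = 1" for j
    using on by (simp add: onf_def norm_eq_sqrt_inner)
  from nt obtain \<epsilon> where \<epsilon>: "\<epsilon> > 0" "\<forall>N. \<exists>j\<ge>N. \<not> norm (K (e j)) < \<epsilon>"
    unfolding LIMSEQ_iff by auto
  define A where "A = {j. norm (K (e j)) \<ge> \<epsilon>}"
  have infA: "infinite A" unfolding infinite_nat_iff_unbounded_le A_def using \<epsilon>(2) by (auto simp: not_less)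
  define \<sigma> where "\<sigma> = enumerate A"
  have \<sigma>mono: "strict_mono \<sigma>" unfolding \<sigma>_def using infA by (simp add: strict_mono_def enumerate_mono)
  have \<sigma>A: "norm (K (e (\<sigma> n))) \<ge> \<epsilon>" for n
    using enumerate_in_set[OF infA, of n] by (simp add: \<sigma>_def A_def)
  have "\<forall>n. K ((1/2) *\<^sub>R e (\<sigma> n)) \<in> closure (K ` ball 0 1)"
  proof
    fix n
    have "(1/2) *\<^sub>R e (\<sigma> n) \<in> ball 0 1" by (simp add: ee)
    then show "K ((1/2) *\<^sub>R e (\<sigma> n)) \<in> closure (K ` ball 0 1)"
      by (meson closure_subset image_eqI subsetD)
  qed
  from seq_compactE[OF compact_imp_seq_compact[OF cpt] this]
  obtain z \<tau> where \<tau>: "strict_mono \<tau>" "((\<lambda>n. K ((1/2) *\<^sub>R e (\<sigma> n))) \<circ> \<tau>) \<longlonglongrightarrow> z"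
    by blast
  define \<phi> where "\<phi> = \<sigma> \<circ> \<tau>"
  have \<phi>mono: "strict_mono \<phi>" unfolding \<phi>_def using \<sigma>mono \<tau>(1) by (rule strict_mono_o)
  define f where "f n = K (e (\<phi> n))" for n
  define y where "y = 2 *\<^sub>R z"
  have "(\<lambda>n. 2 *\<^sub>R K ((1/2) *\<^sub>R e (\<sigma> (\<tau> n)))) \<longlonglongrightarrow> y"
    unfolding y_def using \<tau>(2) by (intro tendsto_scaleR tendsto_const) (simp add: o_def)
  moreover have "2 *\<^sub>R K ((1/2) *\<^sub>R e (\<sigma> (\<tau> n))) = f n" for n
    by (simp add: f_def \<phi>_def linear_scale[OF bounded_linear.linear[OF bl]])
  ultimately have fy: "f \<longlonglongrightarrow> y" by simp
  have "norm y \<ge> \<epsilon>"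
  proof (rule LIMSEQ_le_const[OF tendsto_norm[OF fy]])
    show "\<exists>N. \<forall>n\<ge>N. \<epsilon> \<le> norm (f n)" using \<sigma>A by (auto simp: f_def \<phi>_def)
  qed
  then have "y \<noteq> 0" using \<epsilon>(1) by auto
  then have ny: "inner y y > 0" by simp
  define \<eta> where "\<eta> = inner y y / 2"
  have \<eta>: "\<eta> > 0" using ny by (simp add: \<eta>_def)
  have "(\<lambda>n. inner (f n) y) \<longlonglongrightarrow> inner y y"
    by (intro tendsto_inner fy tendsto_const)
  then have "eventually (\<lambda>n. inner (f n) y > \<eta>) sequentially"
    using ny by (intro order_tendstoD) (auto simp: \<eta>_def)
  then obtain N where N: "\<And>n. n \<ge> N \<Longrightarrow> inner (f n) y > \<eta>"
    by (auto simp: eventually_sequentially)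
  define c where "c n = 1 / real (Suc n)" for n
  have onp: "onf (e \<circ> \<phi>)" using on strict_mono_imp_inj_on[OF \<phi>mono] by (rule onf_reindex)
  have csum: "summable (\<lambda>n. (c n)^2)" unfolding c_def by (rule harmonic_sq_summable)
  have "(\<lambda>n. c n *\<^sub>R (e \<circ> \<phi>) n) sums ser (e \<circ> \<phi>) c"
    unfolding ser_def using onf_ser_summable[OF onp csum] by (rule summable_sums)
  from bounded_linear.sums[OF bl this]
  have "(\<lambda>n. c n *\<^sub>R f n) sums K (ser (e \<circ> \<phi>) c)"
    by (simp add: f_def linear_scale[OF bounded_linear.linear[OF bl]])
  from bounded_linear.sums[OF bounded_linear_inner_left this, of y]
  have "summable (\<lambda>n. c n * inner (f n) y)" by (simp add: sums_summable)
  then have "summable (\<lambda>n. c n * \<eta>)"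
  proof (rule summable_comparison_test'[where N=N])
    fix n assume "n \<ge> N"
    have "c n > 0" by (simp add: c_def)
    then show "norm (c n * \<eta>) \<le> c n * inner (f n) y"
      using N[OF \<open>n \<ge> N\<close>] \<eta> by (simp add: abs_mult less_imp_le)
  qed
  then have "summable (\<lambda>n. c n * \<eta> * (1/\<eta>))" by (rule summable_mult2)
  then have "summable c" using \<eta> by simp
  with harmonic_not_summable show False by (simp add: c_def[abs_def])
qed

fun fbox :: "(nat \<Rightarrow> 'a::real_normed_vector) \<Rightarrow> real \<Rightarrow> nat \<Rightarrow> 'a set" where
  "fbox e B 0 = {0}"
| "fbox e B (Suc n) = {x + y | x y. x \<in> fbox e B n \<and> y \<in> (\<lambda>t. t *\<^sub>R e n) ` {-B..B}}"

lemma box_compact: "compact (fbox e B n)"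
proof (induction n)
  case 0 then show ?case by simp
next
  case (Suc n)
  have "compact ((\<lambda>t. t *\<^sub>R e n) ` {-B..B})"
    by (intro compact_continuous_image continuous_intros) simp
  with Suc show ?case by (simp add: compact_sums)
qed

lemma box_mem: "(\<And>j. j < n \<Longrightarrow> \<bar>c j\<bar> \<le> B) \<Longrightarrow> (\<Sum>j<n. c j *\<^sub>R e j) \<in> fbox e B n"
proof (induction n)
  case 0 then show ?case by simp
next
  case (Suc n)
  then have "(\<Sum>j<n. c j *\<^sub>R e j) \<in> fbox e B n" by simp
  moreover have "c n \<in> {-B..B}" using Suc.prems[of n] by auto
  then have "c n *\<^sub>R e n \<in> (\<lambda>t. t *\<^sub>R e n) ` {-B..B}" by (rule imageI)
  ultimately show ?case by simp blast
qed

lemma compact_op_diag: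
  fixes e :: "nat \<Rightarrow> 'a::{real_inner,complete_space}"
  assumes onb: "orthonormal_basis e" and d0: "d \<longlonglongrightarrow> 0"
  shows "compact_op (diag e d)"
proof -
  have on: "onf e" using onb by (rule onb_onf)
  obtain B where B: "B > 0" "\<And>j. \<bar>d j\<bar> \<le> B"
    using convergent_imp_Bseq[OF convergentI[OF d0]] by (auto elim!: BseqE)
  have bl: "bounded_linear (diag e d)" by (rule diag_bounded_linear[OF onb B(2)])
  have TB: "\<exists>k. finite k \<and> closure (diag e d ` ball 0 1) \<subseteq> (\<Union>z\<in>k. ball z \<epsilon>)" if "\<epsilon> > 0" for \<epsilon>
  proof -
    obtain N where N: "\<And>j. j \<ge> N \<Longrightarrow> \<bar>d j\<bar> < \<epsilon>/4"
      using d0 \<open>\<epsilon> > 0\<close> unfolding LIMSEQ_iff by (metis divide_pos_pos zero_less_numeral norm_conv_dist diff_zero real_norm_def)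
    obtain k where k: "finite k" "fbox e B N \<subseteq> (\<Union>z\<in>k. ball z (\<epsilon>/4))"
      using box_compact[of e B N] \<open>\<epsilon> > 0\<close> unfolding compact_eq_totally_bounded
      by (meson divide_pos_pos zero_less_numeral)
    define d' where "d' j = (if j < N then 0 else d j)" for j
    have d'B: "\<bar>d' j\<bar> \<le> \<epsilon>/4" for j
      using N[of j] \<open>\<epsilon> > 0\<close> by (auto simp: d'_def)
    have sub: "diag e d ` ball 0 1 \<subseteq> (\<Union>z\<in>k. cball z (\<epsilon>/2))"
    proof
      fix u assume "u \<in> diag e d ` ball 0 1"
      then obtain x where x: "norm x < 1" "u = diag e d x" by auto
      define P where "P = (\<Sum>j<N. (d j * coef e x j) *\<^sub>R e j)"
      have dec: "diag e d x = P + diag e d' x"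
      proof (rule onb_eqI[OF onb], fold coef_def)
        fix m
        show "coef e (diag e d x) m = coef e (P + diag e d' x) m"
          unfolding coef_add coef_diag[OF onb d'B] coef_diag[OF onb B(2)]
          using onf_A1[OF on finite_lessThan[of N], of "\<lambda>j. d j * coef e x j" m]
          by (simp add: P_def coef_def[of e "sum _ _"] d'_def)
      qed
      have "\<bar>d j * coef e x j\<bar> \<le> B" for j
      proof -
        have "\<bar>coef e x j\<bar> \<le> norm x * norm (e j)" unfolding coef_def by (rule Cauchy_Schwarz_ineq2)
        also have "norm (e j) = 1" using on by (simp add: onf_def norm_eq_sqrt_inner)
        finally have "\<bar>coef e x j\<bar> \<le> 1" using x(1) by simp
        then have "\<bar>d j\<bar> * \<bar>coef e x j\<bar> \<le> B * 1"
          using B by (intro mult_mono) auto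
        then show ?thesis by (simp add: abs_mult)
      qed
      then have "P \<in> fbox e B N" unfolding P_def by (intro box_mem)
      with k(2) obtain z where z: "z \<in> k" "dist z P < \<epsilon>/4" by auto
      have "norm (diag e d' x) \<le> \<epsilon>/4 * norm x" by (rule diag_norm[OF onb d'B])
      also have "\<dots> \<le> \<epsilon>/4" using x(1) \<open>\<epsilon> > 0\<close> by simp
      finally have R: "norm (diag e d' x) \<le> \<epsilon>/4" .
      have "norm (z - (P + diag e d' x)) \<le> norm (z - P) + norm (diag e d' x)"
        using norm_triangle_ineq4[of "z - P" "diag e d' x"] by (simp add: algebra_simps)
      then have "dist z u \<le> \<epsilon>/2"
        using z(2) R unfolding x(2) dec dist_norm by linarith
      with z(1) show "u \<in> (\<Union>z\<in>k. cball z (\<epsilon>/2))" by auto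
    qed
    have "closed (\<Union>z\<in>k. cball z (\<epsilon>/2))" using k(1) by (intro closed_UN) auto
    with sub have "closure (diag e d ` ball 0 1) \<subseteq> (\<Union>z\<in>k. cball z (\<epsilon>/2))"
      by (rule closure_minimal)
    also have "\<dots> \<subseteq> (\<Union>z\<in>k. ball z \<epsilon>)" using \<open>\<epsilon> > 0\<close> by auto
    finally show ?thesis using k(1) by blast
  qed
  have "compact (closure (diag e d ` ball 0 1))"
    unfolding compact_eq_totally_bounded complete_eq_closed using TB by simp
  with bl show ?thesis by (simp add: compact_op_def)
qed

lemma diag_one:
  fixes e :: "nat \<Rightarrow> 'a::{real_inner,complete_space}"
  assumes onb: "orthonormal_basis e" and "\<And>j. d j = 1"
  shows "diag e d x = x"
proof -
  have b: "\<bar>d j\<bar> \<le> 1" for j using assms(2) by simp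
  show ?thesis by (rule onb_eqI[OF onb], fold coef_def) (simp add: coef_diag[OF onb b] assms(2))
qed

lemma diag_ext:
  "(\<And>j. d j = d' j) \<Longrightarrow> diag e d = diag e d'"
proof -
  assume "\<And>j. d j = d' j"
  then have "d = d'" by (rule ext)
  then show ?thesis by simp
qed

lemma bounds_of_pos_limit:
  fixes r :: "nat \<Rightarrow> real"
  assumes "\<And>j. r j > 0" "r \<longlonglongrightarrow> a" "a > 0"
  obtains m M where "m > 0" "\<And>j. m \<le> r j" "\<And>j. r j \<le> M"
proof -
  obtain M where M: "M > 0" "\<And>j. norm (r j) \<le> M"
    using convergent_imp_Bseq[OF convergentI[OF assms(2)]] by (auto elim!: BseqE)
  have "(\<lambda>j. inverse (r j)) \<longlonglongrightarrow> inverse a"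
    using assms by (intro tendsto_inverse) auto
  then have "Bseq (\<lambda>j. inverse (r j))" by (rule convergent_imp_Bseq[OF convergentI])
  then obtain L where L: "L > 0" "\<And>j. norm (inverse (r j)) \<le> L"
    by (auto elim!: BseqE)
  have "1 / L \<le> r j" for j
  proof -
    have "inverse (r j) \<le> L" using L(2)[of j] assms(1)[of j] by simp
    then show ?thesis using assms(1)[of j] L(1) by (simp add: field_simps)
  qed
  moreover have "r j \<le> M" for j using M(2)[of j] by simp
  ultimately show ?thesis using that[of "1/L" M] L(1) by simp
qed

theorem corollary5p1:
  fixes C Ct :: "'a::{real_inner, complete_space} \<Rightarrow> 'a"
    and e :: "nat \<Rightarrow> 'a" and \<gamma> \<gamma>t :: "nat \<Rightarrow> real"
  assumes "bounded_linear C" "selfadjoint_op C" "posdef_op C" "compact_op C"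
    and "bounded_linear Ct" "selfadjoint_op Ct" "posdef_op Ct" "compact_op Ct"
    and "orthonormal_basis e"
    and "\<And>j. \<gamma> j > 0" "\<And>j. \<gamma>t j > 0"
    and "\<gamma> \<longlonglongrightarrow> 0" "\<gamma>t \<longlonglongrightarrow> 0"
    and "\<And>j. C (e j) = \<gamma> j *\<^sub>R e j" "\<And>j. Ct (e j) = \<gamma>t j *\<^sub>R e j"
  shows "(CM_norm_equivalent C Ct \<and> (\<exists>a>0. sandwich_minus_compact C Ct a))
     \<longleftrightarrow> (\<exists>a>0. (\<lambda>j. \<gamma>t j / \<gamma> j) \<longlonglongrightarrow> a)"
proof -
  note onb = assms(9)
  have on: "onf e" using onb by (rule onb_onf)
  obtain Bg where Bg: "Bg > 0" "\<And>j. norm (\<gamma> j) \<le> Bg"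
    using convergent_imp_Bseq[OF convergentI[OF assms(12)]] by (auto elim!: BseqE)
  obtain Bt where Bt: "Bt > 0" "\<And>j. norm (\<gamma>t j) \<le> Bt"
    using convergent_imp_Bseq[OF convergentI[OF assms(13)]] by (auto elim!: BseqE)
  have gB: "\<And>j. \<bar>\<gamma> j\<bar> \<le> Bg" using Bg(2) by simp
  have gtB: "\<And>j. \<bar>\<gamma>t j\<bar> \<le> Bt" using Bt(2) by simp
  have Cdiag: "C = diag e \<gamma>"
  proof (rule diag_cong_fun[OF onb gB])
    fix x k show "coef e (C x) k = \<gamma> k * coef e x k"
      using assms(2) unfolding selfadjoint_op_def coef_def by (simp add: assms(14))
  qed
  have Ctdiag: "Ct = diag e \<gamma>t"
  proof (rule diag_cong_fun[OF onb gtB])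
    fix x k show "coef e (Ct x) k = \<gamma>t k * coef e x k"
      using assms(6) unfolding selfadjoint_op_def coef_def by (simp add: assms(15))
  qed
  define s where "s = (\<lambda>j. sqrt (\<gamma> j))"
  define t where "t = (\<lambda>j. sqrt (\<gamma>t j))"
  have sqC: "sqrt_op C = diag e s"
    using sqrt_op_diag[OF onb assms(10) gB Cdiag] by (simp add: s_def)
  have sqCt: "sqrt_op Ct = diag e t"
    using sqrt_op_diag[OF onb assms(11) gtB Ctdiag] by (simp add: t_def)
  have sB: "\<bar>s j\<bar> \<le> sqrt Bg" for j
    using gB[of j] assms(10)[of j] by (simp add: s_def real_sqrt_le_mono)
  have tB: "\<bar>t j\<bar> \<le> sqrt Bt" for j
    using gtB[of j] assms(11)[of j] by (simp add: t_def real_sqrt_le_mono)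
  have spos: "s j > 0" for j using assms(10)[of j] by (simp add: s_def)
  have tpos: "t j > 0" for j using assms(11)[of j] by (simp add: t_def)
  have ss: "s j * s j = \<gamma> j" for j using assms(10)[of j] by (simp add: s_def less_imp_le)
  have tt: "t j * t j = \<gamma>t j" for j using assms(11)[of j] by (simp add: t_def less_imp_le)
  let ?S = "diag e s"
  let ?T = "diag e t"
  have linS: "linear ?S" by (rule bounded_linear.linear[OF diag_bounded_linear[OF onb sB]])
  have linT: "linear ?T" by (rule bounded_linear.linear[OF diag_bounded_linear[OF onb tB]])
  have linCt: "linear Ct" by (rule bounded_linear.linear[OF assms(5)])
  have injS: "inj ?S" by (rule diag_inj[OF onb sB]) (use spos in \<open>simp add: less_imp_neq[symmetric]\<close>)
  have injT: "inj ?T" by (rule diag_inj[OF onb tB]) (use tpos in \<open>simp add: less_imp_neq[symmetric]\<close>)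
  have invS: "invsqrt_op C (?S x) = x" for x
    unfolding invsqrt_op_def sqC by (rule inv_into_f_f[OF injS]) simp
  have invT: "invsqrt_op Ct (?T x) = x" for x
    unfolding invsqrt_op_def sqCt by (rule inv_into_f_f[OF injT]) simp
  have Se: "?S (c *\<^sub>R e k) = (c * s k) *\<^sub>R e k" for c k
    by (simp add: linear_scale[OF linS] diag_basis[OF onb sB])
  have ej: "e j = ?S ((1 / s j) *\<^sub>R e j)" for j
    using spos[of j] by (simp add: Se)
  show ?thesis
  proof
    assume H: "CM_norm_equivalent C Ct \<and> (\<exists>a>0. sandwich_minus_compact C Ct a)"
    then obtain a K where a: "a > 0" and K: "compact_op K"
      and KD: "\<forall>x\<in>sandwich_dom C Ct. sandwich_op C Ct x - a *\<^sub>R x = K x"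
      unfolding sandwich_minus_compact_def by blast
    have key: "e j \<in> sandwich_dom C Ct \<and> sandwich_op C Ct (e j) = (\<gamma>t j / \<gamma> j) *\<^sub>R e j" for j
    proof -
      have inv1: "invsqrt_op C (e j) = (1/s j) *\<^sub>R e j"
        using invS[of "(1 / s j) *\<^sub>R e j"] ej[of j] by simp
      have "Ct ((1/s j) *\<^sub>R e j) = (1/s j * \<gamma>t j) *\<^sub>R e j"
        by (simp add: linear_scale[OF linCt] assms(15))
      also have "\<dots> = ?S ((\<gamma>t j / \<gamma> j) *\<^sub>R e j)"
        using spos[of j] by (simp add: Se ss[symmetric] field_simps)
      finally have Ct1: "Ct ((1/s j) *\<^sub>R e j) = ?S ((\<gamma>t j / \<gamma> j) *\<^sub>R e j)" .
      have "e j \<in> range ?S" using ej[of j] by (rule range_eqI)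
      moreover have "?S ((\<gamma>t j / \<gamma> j) *\<^sub>R e j) \<in> range ?S" by simp
      ultimately show ?thesis
        by (simp add: sandwich_dom_def sandwich_op_def CM_space_def sqC inv1 Ct1 invS)
    qed
    have Kej: "K (e j) = (\<gamma>t j / \<gamma> j - a) *\<^sub>R e j" for j
    proof -
      have dj: "e j \<in> sandwich_dom C Ct" using key[of j] by (rule conjunct1)
      have "K (e j) = sandwich_op C Ct (e j) - a *\<^sub>R e j" using bspec[OF KD dj] by (rule sym)
      also have "\<dots> = (\<gamma>t j / \<gamma> j - a) *\<^sub>R e j" using key[of j] by (simp add: scaleR_left_diff_distrib)
      finally show ?thesis .
    qed
    have "(\<lambda>j. K (e j)) \<longlonglongrightarrow> 0" by (rule compact_op_basis_tendsto[OF K on])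
    then have "(\<lambda>j. norm (K (e j))) \<longlonglongrightarrow> 0" by (rule tendsto_norm_zero)
    moreover have "norm (K (e j)) = \<bar>\<gamma>t j / \<gamma> j - a\<bar>" for j
      using on by (simp add: Kej onf_def norm_eq_sqrt_inner)
    ultimately have "(\<lambda>j. \<bar>\<gamma>t j / \<gamma> j - a\<bar>) \<longlonglongrightarrow> 0" by simp
    then have "(\<lambda>j. \<gamma>t j / \<gamma> j - a) \<longlonglongrightarrow> 0" by (simp add: tendsto_rabs_zero_iff)
    then have "(\<lambda>j. \<gamma>t j / \<gamma> j) \<longlonglongrightarrow> a" by (simp add: LIM_zero_iff)
    with a show "\<exists>a>0. (\<lambda>j. \<gamma>t j / \<gamma> j) \<longlonglongrightarrow> a" by blast
  next
    assume "\<exists>a>0. (\<lambda>j. \<gamma>t j / \<gamma> j) \<longlonglongrightarrow> a"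
    then obtain a where a: "a > 0" "(\<lambda>j. \<gamma>t j / \<gamma> j) \<longlonglongrightarrow> a" by blast
    define r where "r = (\<lambda>j. \<gamma>t j / \<gamma> j)"
    have rpos: "r j > 0" for j using assms(10,11)[of j] by (simp add: r_def)
    have rlim: "r \<longlonglongrightarrow> a" using a(2) by (simp add: r_def)
    obtain m M where mM: "m > 0" "\<And>j. m \<le> r j" "\<And>j. r j \<le> M"
      using bounds_of_pos_limit[OF rpos rlim a(1)] by blast
    have Mpos: "M > 0" using mM(1) mM(2)[of 0] mM(3)[of 0] by simp
    have gtr: "\<gamma>t j = r j * \<gamma> j" for j using assms(10)[of j] by (simp add: r_def)
    define q where "q = (\<lambda>j. sqrt (r j))"
    have qpos: "q j > 0" for j using rpos[of j] by (simp add: q_def)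
    have tq: "t j = q j * s j" for j
      by (simp add: t_def q_def s_def gtr real_sqrt_mult)
    have qB: "\<bar>q j\<bar> \<le> sqrt M" for j
      using mM(3)[of j] rpos[of j] by (simp add: q_def real_sqrt_le_mono)
    have qiB: "\<bar>1 / q j\<bar> \<le> 1 / sqrt m" for j
    proof -
      have "sqrt m \<le> q j" using mM(2)[of j] by (simp add: q_def real_sqrt_le_mono)
      then show ?thesis using qpos[of j] mM(1) by (simp add: frac_le)
    qed
    have ST: "?S x = ?T (diag e (\<lambda>j. 1 / q j) x)" for x
    proof -
      have "?T (diag e (\<lambda>j. 1 / q j) x) = diag e (\<lambda>j. t j * (1 / q j)) x"
        by (rule diag_diag[OF onb tB qiB])
      also have "diag e (\<lambda>j. t j * (1 / q j)) = ?S"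
        by (rule diag_ext) (use qpos in \<open>simp add: tq less_imp_neq[symmetric]\<close>)
      finally show ?thesis by simp
    qed
    have TS: "?T y = ?S (diag e q y)" for y
    proof -
      have "?S (diag e q y) = diag e (\<lambda>j. s j * q j) y"
        by (rule diag_diag[OF onb sB qB])
      also have "diag e (\<lambda>j. s j * q j) = ?T"
        by (rule diag_ext) (simp add: tq mult.commute)
      finally show ?thesis by simp
    qed
    have rangeST: "range ?S = range ?T"
    proof
      show "range ?S \<subseteq> range ?T" using ST by blast
      show "range ?T \<subseteq> range ?S" using TS by blast
    qed
    have inv_q: "x = diag e q (diag e (\<lambda>j. 1 / q j) x)" for x
    proof -
      have "diag e q (diag e (\<lambda>j. 1 / q j) x) = diag e (\<lambda>j. q j * (1 / q j)) x"
        by (rule diag_diag[OF onb qB qiB])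
      also have "\<dots> = x"
        by (rule diag_one[OF onb]) (use qpos in \<open>simp add: less_imp_neq[symmetric]\<close>)
      finally show ?thesis by simp
    qed
    have eqsp: "CM_space C = CM_space Ct" by (simp add: CM_space_def sqC sqCt rangeST)
    have bnd: "1 / sqrt M * CM_norm C u \<le> CM_norm Ct u \<and> CM_norm Ct u \<le> 1 / sqrt m * CM_norm C u"
      if "u \<in> CM_space C" for u
    proof
      from that obtain x where u: "u = ?S x" by (auto simp: CM_space_def sqC)
      have n1: "CM_norm C u = norm x" by (simp add: CM_norm_def u invS)
      have n2: "CM_norm Ct u = norm (diag e (\<lambda>j. 1 / q j) x)"
        by (simp add: CM_norm_def u ST invT)
      have "norm x \<le> sqrt M * norm (diag e (\<lambda>j. 1 / q j) x)"
        using diag_norm[OF onb, where d=q and x="diag e (\<lambda>j. 1 / q j) x", OF qB] inv_q[of x] by simp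
      then show "1 / sqrt M * CM_norm C u \<le> CM_norm Ct u"
        using Mpos by (simp add: n1 n2 field_simps)
      have "norm (diag e (\<lambda>j. 1 / q j) x) \<le> 1 / sqrt m * norm x"
        by (rule diag_norm[OF onb qiB])
      then show "CM_norm Ct u \<le> 1 / sqrt m * CM_norm C u"
        by (simp add: n1 n2)
    qed
    have pos: "1 / sqrt M > 0" "1 / sqrt m > 0" using mM(1) Mpos by simp_all
    have I: "CM_norm_equivalent C Ct"
      unfolding CM_norm_equivalent_def
      by (rule conjI[OF eqsp], rule exI[of _ "1 / sqrt M"], rule exI[of _ "1 / sqrt m"])
         (intro conjI pos ballI bnd)
    have rsB: "\<bar>r j * s j\<bar> \<le> M * sqrt Bg" for j
      using mM(3)[of j] rpos[of j] sB[of j] spos[of j]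
      by (simp add: abs_mult mult_mono' less_imp_le)
    have Ctx: "Ct x = ?S (diag e (\<lambda>j. r j * s j) x)" for x
    proof -
      have "?S (diag e (\<lambda>j. r j * s j) x) = diag e (\<lambda>j. s j * (r j * s j)) x"
        by (rule diag_diag[OF onb sB rsB])
      also have "diag e (\<lambda>j. s j * (r j * s j)) = diag e \<gamma>t"
        by (rule diag_ext) (simp add: gtr ss[symmetric] ac_simps)
      finally show ?thesis by (simp add: Ctdiag)
    qed
    have dom: "sandwich_dom C Ct = range ?S"
      by (auto simp: sandwich_dom_def CM_space_def sqC invS Ctx)
    have sw: "sandwich_op C Ct (?S x) = diag e (\<lambda>j. r j * s j) x" for x
      by (simp add: sandwich_op_def invS Ctx)
    have ra0: "(\<lambda>j. r j - a) \<longlonglongrightarrow> 0" using rlim by (simp add: LIM_zero_iff)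
    have raB: "\<bar>r j - a\<bar> \<le> M + a" for j using mM(3)[of j] rpos[of j] a(1) by simp
    have III: "sandwich_minus_compact C Ct a"
      unfolding sandwich_minus_compact_def
    proof (intro conjI exI[of _ "diag e (\<lambda>j. r j - a)"] ballI)
      have "subspace (range ?S)" by (rule linear_subspace_image[OF linS subspace_UNIV])
      moreover have "range e \<subseteq> range ?S" using ej by blast
      ultimately have "span (range e) \<subseteq> range ?S" by (intro span_minimal)
      then have "closure (span (range e)) \<subseteq> closure (sandwich_dom C Ct)"
        unfolding dom by (rule closure_mono)
      then show "closure (sandwich_dom C Ct) = UNIV"
        using onb by (auto simp: orthonormal_basis_def)
      show "compact_op (diag e (\<lambda>j. r j - a))" by (rule compact_op_diag[OF onb ra0])
      fix u assume "u \<in> sandwich_dom C Ct"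
      then obtain x where u: "u = ?S x" by (auto simp: dom)
      have "(\<lambda>j. s j * (r j - a)) = (\<lambda>j. s j * (r j - a))" ..
      have raS: "\<bar>(r j - a) * s j\<bar> \<le> (M + a) * sqrt Bg" for j
        using raB[of j] sB[of j] by (simp add: abs_mult mult_mono')
      show "sandwich_op C Ct u - a *\<^sub>R u = diag e (\<lambda>j. r j - a) u"
        unfolding u sw diag_diag[OF onb raB sB]
      proof (rule onb_eqI[OF onb], fold coef_def)
        fix k
        have bd: "\<bar>r j - a\<bar> * \<bar>s j\<bar> \<le> (M + a) * sqrt Bg" for j
          using raS[of j] by (simp add: abs_mult)
        show "coef e (diag e (\<lambda>j. r j * s j) x - a *\<^sub>R diag e s x) k =
              coef e (diag e (\<lambda>j. (r j - a) * s j) x) k"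
        proof -
          have c3: "coef e (diag e (\<lambda>j. (r j - a) * s j) x) k = (r k - a) * s k * coef e x k"
            by (rule coef_diag[OF onb raS])
          have c1: "coef e (diag e (\<lambda>j. r j * s j) x) k = r k * s k * coef e x k"
            by (rule coef_diag[OF onb rsB])
          have c2: "coef e (diag e s x) k = s k * coef e x k"
            by (rule coef_diag[OF onb sB])
          show ?thesis unfolding c3 coef_diff coef_scale c1 c2 by (simp add: algebra_simps)
        qed
      qed
    qed
    show "CM_norm_equivalent C Ct \<and> (\<exists>a>0. sandwich_minus_compact C Ct a)"
      using I III a(1) by blast
  qed
qed

end
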